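(* Let $G=(V,E)$ be a finite $k$-regular graph with $\widetilde\lambda_2=\widetilde\lambda_2(G)<\frac12$, and suppose $|V|$ is sufficiently large, i.e. $|V|\ge N$ for a threshold $N$ depending only on $\widetilde\lambda_2$. Then for every subset $\emptyset\ne S\subsetneq V$, $|E(S,\bar S)|\ge k$.
   Context: $\widetilde\lambda_2(G)$ is the second largest eigenvalue of the adjacency matrix of $G$ divided by $k$. $E(S,\bar S)$ is the set of edges with one endpoint in $S$ and the other in $V\setminus S$. *)

theory Defs
  imports "Jordan_Normal_Form.Char_Poly" "HOL-Library.Multiset"
begin

definition simple_graph :: "nat \<Rightarrow> (nat \<Rightarrow> nat \<Rightarrow> bool) \<Rightarrow> bool" where
  "simple_graph n E \<longleftrightarrow> (\<forall>u v. E u v \<longrightarrow> u < n \<and> v < n \<and> u \<noteq> v \<and> E v u)"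

definition regular_graph :: "nat \<Rightarrow> (nat \<Rightarrow> nat \<Rightarrow> bool) \<Rightarrow> nat \<Rightarrow> bool" where
  "regular_graph n E k \<longleftrightarrow> simple_graph n E \<and> (\<forall>v<n. card {u. u < n \<and> E v u} = k)"

definition adj_matrix :: "nat \<Rightarrow> (nat \<Rightarrow> nat \<Rightarrow> bool) \<Rightarrow> real mat" where
  "adj_matrix n E = mat n n (\<lambda>(i, j). if E i j then 1 else 0)"

text \<open>Eigenvalues with multiplicity, listed in non-increasing order
  (roots of the characteristic polynomial; real since the matrix is symmetric).\<close>
definition eigenvalues_desc :: "real mat \<Rightarrow> real list" where
  "eigenvalues_desc A = rev (sorted_list_of_multiset (proots (char_poly A)))"

definition lambda2 :: "nat \<Rightarrow> (nat \<Rightarrow> nat \<Rightarrow> bool) \<Rightarrow> real" where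
  "lambda2 n E = eigenvalues_desc (adj_matrix n E) ! 1"

definition lambda2_norm :: "nat \<Rightarrow> (nat \<Rightarrow> nat \<Rightarrow> bool) \<Rightarrow> nat \<Rightarrow> real" where
  "lambda2_norm n E k = lambda2 n E / real k"

definition cut_edges :: "nat \<Rightarrow> (nat \<Rightarrow> nat \<Rightarrow> bool) \<Rightarrow> nat set \<Rightarrow> (nat \<times> nat) set" where
  "cut_edges n E S = {(u, v). u \<in> S \<and> v \<in> {0..<n} - S \<and> E u v}"

end

theory Submission
  imports Defs "Jordan_Normal_Form.Schur_Decomposition"
begin

lemma vec_self_pos:
  fixes v :: "real vec"
  assumes v: "v \<in> carrier_vec n" and v0: "v \<noteq> 0\<^sub>v n"
  shows "v \<bullet> v > 0"
proof -
  from v v0 obtain i where i: "i < n" and vi: "v $ i \<noteq> 0"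
    by (metis carrier_vecD eq_vecI index_zero_vec(1,2))
  have "v \<bullet> v = (\<Sum>j\<in>{0..<n}. v $ j * v $ j)" using v unfolding scalar_prod_def by simp
  also have "\<dots> > 0"
    by (rule sum_pos2[of _ i]) (use i vi in \<open>auto simp: zero_less_mult_iff linorder_neq_iff\<close>)
  finally show ?thesis .
qed

lemma real_eigen:
  fixes A :: "real mat"
  assumes A: "A \<in> carrier_mat n n" and n: "n > 0" and sym: "transpose_mat A = A"
  shows "\<exists>e v. v \<in> carrier_vec n \<and> v \<bullet> v = 1 \<and> A *\<^sub>v v = e \<cdot>\<^sub>v v"
proof -
  define Ac where "Ac = map_mat complex_of_real A"
  have Ac: "Ac \<in> carrier_mat n n" using A unfolding Ac_def by auto
  from char_poly_factorized[OF Ac] obtain as where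
    cp: "char_poly Ac = (\<Prod>a\<leftarrow>as. [:- a, 1:])" and len: "length as = n" by blast
  from len n obtain a as' where as: "as = a # as'" by (cases as) auto
  have "poly (char_poly Ac) a = 0" unfolding cp as by simp
  hence "eigenvalue Ac a" using eigenvalue_root_char_poly[OF Ac] by simp
  from find_eigenvector[OF Ac this] obtain vc where "eigenvector Ac vc a" by blast
  hence vc: "vc \<in> carrier_vec n" and vc0: "vc \<noteq> 0\<^sub>v n" and ev: "Ac *\<^sub>v vc = a \<cdot>\<^sub>v vc"
    unfolding eigenvector_def using Ac by auto
  define q where "q = (\<Sum>i<n. cnj (vc $ i) * (Ac *\<^sub>v vc) $ i)"
  define s where "s = (\<Sum>i<n. cnj (vc $ i) * vc $ i)"
  have q1: "q = a * s" unfolding q_def s_def using vc ev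
    by (simp add: sum_distrib_left mult_ac)
  have q2: "q = (\<Sum>i<n. \<Sum>j<n. cnj (vc $ i) * complex_of_real (A $$ (i,j)) * vc $ j)"
    unfolding q_def using vc A
    by (simp add: Ac_def scalar_prod_def sum_distrib_left mult_ac lessThan_atLeast0)
  have symA: "\<And>i j. i < n \<Longrightarrow> j < n \<Longrightarrow> A $$ (j,i) = A $$ (i,j)"
    by (metis A carrier_matD(1,2) index_transpose_mat(1) sym)
  have "cnj q = (\<Sum>i<n. \<Sum>j<n. vc $ i * complex_of_real (A $$ (i,j)) * cnj (vc $ j))"
    unfolding q2 by (simp add: cnj_sum)
  also have "\<dots> = (\<Sum>j<n. \<Sum>i<n. vc $ i * complex_of_real (A $$ (i,j)) * cnj (vc $ j))"
    by (rule sum.swap)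
  also have "\<dots> = q" unfolding q2
    by (intro sum.cong refl) (simp add: symA mult_ac)
  finally have "cnj q = q" .
  hence "Im (cnj q) = Im q" by (simp only:)
  hence qr: "Im q = 0" by simp
  define X where "X = (\<Sum>i<n. (cmod (vc $ i))^2)"
  have s_eq: "s = complex_of_real X"
    unfolding s_def X_def of_real_sum by (intro sum.cong refl) (metis complex_norm_square mult.commute)
  from vc vc0 obtain i where i: "i < n" and vi: "vc $ i \<noteq> 0"
    by (metis carrier_vecD eq_vecI index_zero_vec(1,2))
  have spos: "X > 0" unfolding X_def
    by (rule sum_pos2[of _ i]) (use i vi in auto)
  have "a = q / complex_of_real X" using q1 spos s_eq by auto
  hence ar: "Im a = 0" using qr by (simp add: Im_divide_of_real)
  define e where "e = Re a"
  have ae: "a = complex_of_real e" using ar unfolding e_def by (simp add: complex_eq_iff)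
  have "poly (char_poly Ac) a = complex_of_real (poly (char_poly A) e)"
    unfolding Ac_def of_real_hom.char_poly_hom[OF A] ae
    by (simp add: of_real_hom.poly_map_poly)
  with \<open>poly (char_poly Ac) a = 0\<close> have "poly (char_poly A) e = 0" by simp
  hence "eigenvalue A e" using eigenvalue_root_char_poly[OF A] by simp
  from find_eigenvector[OF A this] obtain v where "eigenvector A v e" by blast
  hence v: "v \<in> carrier_vec n" and v0: "v \<noteq> 0\<^sub>v n" and evr: "A *\<^sub>v v = e \<cdot>\<^sub>v v"
    unfolding eigenvector_def using A by auto
  have vpos: "v \<bullet> v > 0" by (rule vec_self_pos[OF v v0])
  define u where "u = (1 / sqrt (v \<bullet> v)) \<cdot>\<^sub>v v"
  have u: "u \<in> carrier_vec n" using v unfolding u_def by simp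
  have "u \<bullet> u = (1 / sqrt (v \<bullet> v)) * (1 / sqrt (v \<bullet> v)) * (v \<bullet> v)"
    unfolding u_def using v by (simp add: mult.assoc)
  also have "\<dots> = 1" using vpos by (simp add: field_simps)
  finally have uu: "u \<bullet> u = 1" .
  have "A *\<^sub>v u = e \<cdot>\<^sub>v u" unfolding u_def using A v evr
    by (simp add: mult_mat_vec smult_smult_assoc mult.commute)
  thus ?thesis using u uu by blast
qed

lemma conj_real_vec[simp]: "conjugate (u :: real vec) = u"
  by (rule eq_vecI) auto

lemma orth_ext:
  fixes v :: "real vec"
  assumes v: "v \<in> carrier_vec n" and vv: "v \<bullet> v = 1"
  shows "\<exists>W. W \<in> carrier_mat n n \<and> transpose_mat W * W = 1\<^sub>m n \<and> col W 0 = v"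
proof -
  have v0: "v \<noteq> 0\<^sub>v n" using vv by auto
  interpret cof_vec_space n "TYPE(real)" .
  define b where "b = basis_completion v"
  from basis_completion[OF v v0, folded b_def]
  have b: "set b \<subseteq> carrier_vec n" and dist: "distinct b" and indep: "\<not> lin_dep (set b)"
    and lenb: "length b = n" and hdb: "hd b = v" by auto
  have "b \<noteq> []" unfolding b_def basis_completion_def Let_def by simp
  with hdb obtain vs where bv: "b = v # vs" by (cases b) auto
  define ws where "ws = gram_schmidt n b"
  from gram_schmidt_result[OF b dist indep ws_def]
  have orth: "corthogonal ws" and wsc: "set ws \<subseteq> carrier_vec n" and lenw: "length ws = n"
    using lenb by auto
  have hdw: "hd ws = v" unfolding ws_def bv using v by simp
  have npos: "n > 0" using lenb bv by auto
  have ws0: "ws ! 0 = v" using hdw lenw npos by (cases ws) auto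
  have wsi: "\<And>i. i < n \<Longrightarrow> ws ! i \<in> carrier_vec n" using wsc lenw by auto
  have wpos: "\<And>i. i < n \<Longrightarrow> ws ! i \<bullet> ws ! i > 0"
  proof -
    fix i assume i: "i < n"
    have "ws ! i \<bullet>c ws ! i \<noteq> 0" using corthogonalD[OF orth, of i i] i lenw by auto
    hence "ws ! i \<noteq> 0\<^sub>v n" using wsi[OF i] by auto
    thus "ws ! i \<bullet> ws ! i > 0" using vec_self_pos wsi[OF i] by blast
  qed
  have worth: "\<And>i j. i < n \<Longrightarrow> j < n \<Longrightarrow> i \<noteq> j \<Longrightarrow> ws ! i \<bullet> ws ! j = 0"
    using corthogonalD[OF orth] lenw by auto
  define ws' where "ws' = map (\<lambda>w. (1 / sqrt (w \<bullet> w)) \<cdot>\<^sub>v w) ws"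
  have lenw': "length ws' = n" unfolding ws'_def using lenw by simp
  have ws'i: "\<And>i. i < n \<Longrightarrow> ws' ! i = (1 / sqrt (ws ! i \<bullet> ws ! i)) \<cdot>\<^sub>v (ws ! i)"
    unfolding ws'_def using lenw by simp
  have ws'c: "\<And>i. i < n \<Longrightarrow> ws' ! i \<in> carrier_vec n" using ws'i wsi by simp
  have ws'o: "\<And>i j. i < n \<Longrightarrow> j < n \<Longrightarrow> ws' ! i \<bullet> ws' ! j = (if i = j then 1 else 0)"
  proof -
    fix i j assume i: "i < n" and j: "j < n"
    have "ws' ! i \<bullet> ws' ! j = (1 / sqrt (ws ! i \<bullet> ws ! i)) * (1 / sqrt (ws ! j \<bullet> ws ! j)) * (ws ! i \<bullet> ws ! j)"
      unfolding ws'i[OF i] ws'i[OF j] using wsi[OF i] wsi[OF j] by (simp add: mult.assoc)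
    also have "\<dots> = (if i = j then 1 else 0)"
      using wpos[OF i] worth[OF i j] by (auto simp: field_simps)
    finally show "ws' ! i \<bullet> ws' ! j = (if i = j then 1 else 0)" .
  qed
  define W where "W = mat_of_cols n ws'"
  have W: "W \<in> carrier_mat n n" unfolding W_def using lenw' by auto
  have colW: "\<And>j. j < n \<Longrightarrow> col W j = ws' ! j" unfolding W_def using lenw' ws'c by simp
  have "transpose_mat W * W = 1\<^sub>m n"
    by (rule eq_matI) (use W colW ws'o in auto)
  moreover have "col W 0 = v" using colW[OF npos] ws'i[OF npos] ws0 vv by simp
  ultimately show ?thesis using W by blast
qed

lemma spectral:
  fixes A :: "real mat"
  assumes "A \<in> carrier_mat n n" and "transpose_mat A = A"
  shows "\<exists>U D. U \<in> carrier_mat n n \<and> D \<in> carrier_mat n n \<and> transpose_mat U * U = 1\<^sub>m n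
     \<and> diagonal_mat D \<and> A = U * D * transpose_mat U"
  using assms
proof (induction n arbitrary: A)
  case 0
  have "A = 1\<^sub>m 0 * A * transpose_mat (1\<^sub>m 0)" using 0 by (intro eq_matI) auto
  moreover have "diagonal_mat A" using 0 unfolding diagonal_mat_def by auto
  ultimately show ?case using 0 by (intro exI[of _ "1\<^sub>m 0"] exI[of _ A]) auto
next
  case (Suc m A)
  let ?n = "Suc m"
  have A: "A \<in> carrier_mat ?n ?n" and symA: "transpose_mat A = A" using Suc.prems by auto
  obtain e v where v: "v \<in> carrier_vec ?n" and vv: "v \<bullet> v = 1" and ev: "A *\<^sub>v v = e \<cdot>\<^sub>v v"
    using real_eigen[OF A _ symA] by blast
  obtain W where W: "W \<in> carrier_mat ?n ?n" and WW: "transpose_mat W * W = 1\<^sub>m ?n"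
    and W0: "col W 0 = v" using orth_ext[OF v vv] by blast
  have WT: "transpose_mat W \<in> carrier_mat ?n ?n" using W by simp
  have WW': "W * transpose_mat W = 1\<^sub>m ?n" using mat_mult_left_right_inverse[OF WT W WW] .
  define C where "C = transpose_mat W * A * W"
  have C: "C \<in> carrier_mat ?n ?n" unfolding C_def using W A by auto
  have Cij: "\<And>i j. i < ?n \<Longrightarrow> j < ?n \<Longrightarrow> C $$ (i,j) = col W i \<bullet> (A *\<^sub>v col W j)"
  proof -
    fix i j assume i: "i < ?n" and j: "j < ?n"
    have Ceq: "C = transpose_mat W * (A * W)" unfolding C_def using W A by (simp add: assoc_mult_mat[OF WT A W])
    have d1: "i < dim_row (transpose_mat W)" using i W by simp
    have d2: "j < dim_col (A * W)" using j W A by simp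
    have "C $$ (i,j) = row (transpose_mat W) i \<bullet> col (A * W) j"
      unfolding Ceq by (rule index_mult_mat(1)[OF d1 d2])
    also have "row (transpose_mat W) i = col W i" using i W by simp
    also have "col (A * W) j = A *\<^sub>v col W j" by (rule col_mult2[OF A W j])
    finally show "C $$ (i,j) = col W i \<bullet> (A *\<^sub>v col W j)" .
  qed
  have WWij: "\<And>i j. i < ?n \<Longrightarrow> j < ?n \<Longrightarrow> col W i \<bullet> col W j = (if i = j then 1 else 0)"
  proof -
    fix i j assume i: "i < ?n" and j: "j < ?n"
    have "(transpose_mat W * W) $$ (i,j) = col W i \<bullet> col W j" using i j W by simp
    thus "col W i \<bullet> col W j = (if i = j then 1 else 0)" using WW i j by simp
  qed
  have Ci0: "\<And>i. i < ?n \<Longrightarrow> C $$ (i,0) = (if i = 0 then e else 0)"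
  proof -
    fix i assume i: "i < ?n"
    have "C $$ (i,0) = col W i \<bullet> (e \<cdot>\<^sub>v col W 0)" using Cij[OF i] ev W0 by simp
    also have "\<dots> = e * (col W i \<bullet> col W 0)" using W i by simp
    finally show "C $$ (i,0) = (if i = 0 then e else 0)" using WWij[OF i] by simp
  qed
  have symC: "transpose_mat C = C"
  proof -
    have "transpose_mat C = transpose_mat (transpose_mat W * (A * W))"
      unfolding C_def using W A by (simp add: assoc_mult_mat[OF WT A W])
    also have "\<dots> = transpose_mat (A * W) * W" using transpose_mult[OF WT, of "A * W" ?n] W A by simp
    also have "\<dots> = transpose_mat W * A * W" using transpose_mult[OF A W] symA by simp
    finally show ?thesis unfolding C_def .
  qed
  have Csym: "\<And>i j. i < ?n \<Longrightarrow> j < ?n \<Longrightarrow> C $$ (j,i) = C $$ (i,j)"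
    by (metis C carrier_matD(1,2) index_transpose_mat(1) symC)
  define C3 where "C3 = mat m m (\<lambda>(i,j). C $$ (Suc i, Suc j))"
  have C3: "C3 \<in> carrier_mat m m" unfolding C3_def by simp
  have symC3: "transpose_mat C3 = C3" unfolding C3_def by (rule eq_matI) (auto simp: Csym)
  obtain U3 D3 where U3: "U3 \<in> carrier_mat m m" and D3: "D3 \<in> carrier_mat m m"
    and UU3: "transpose_mat U3 * U3 = 1\<^sub>m m" and dD3: "diagonal_mat D3"
    and C3eq: "C3 = U3 * D3 * transpose_mat U3"
    using Suc.IH[OF C3 symC3] by blast
  define E where "E = mat 1 1 (\<lambda>_. e)"
  have E: "E \<in> carrier_mat 1 1" unfolding E_def by simp
  have Cblock: "C = four_block_mat E (0\<^sub>m 1 m) (0\<^sub>m m 1) C3"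
  proof (rule eq_matI)
    fix i j assume i: "i < dim_row (four_block_mat E (0\<^sub>m 1 m) (0\<^sub>m m 1) C3)"
      and j: "j < dim_col (four_block_mat E (0\<^sub>m 1 m) (0\<^sub>m m 1) C3)"
    hence i: "i < ?n" and j: "j < ?n" using E C3 by auto
    show "C $$ (i,j) = four_block_mat E (0\<^sub>m 1 m) (0\<^sub>m m 1) C3 $$ (i,j)"
    proof (cases "j = 0")
      case True
      thus ?thesis using i Ci0[OF i] E_def C3 by auto
    next
      case False
      note j0 = False
      show ?thesis
      proof (cases "i = 0")
        case True
        thus ?thesis using j j0 Ci0[OF j] Csym[OF i j] E_def C3 by auto
      next
        case False
        thus ?thesis using i j j0 C3_def E_def
          by (cases i; cases j) auto
      qed
    qed
  qed (use C E C3 in auto)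
  define U' where "U' = four_block_mat (1\<^sub>m 1) (0\<^sub>m 1 m) (0\<^sub>m m 1) U3"
  define D' where "D' = four_block_mat E (0\<^sub>m 1 m) (0\<^sub>m m 1) D3"
  have U': "U' \<in> carrier_mat ?n ?n" unfolding U'_def using U3 by auto
  have D': "D' \<in> carrier_mat ?n ?n" unfolding D'_def using D3 E by auto
  have U'T: "transpose_mat U' = four_block_mat (1\<^sub>m 1) (0\<^sub>m 1 m) (0\<^sub>m m 1) (transpose_mat U3)"
    unfolding U'_def by (subst transpose_four_block_mat) (use U3 in auto)
  have U'TU': "transpose_mat U' * U' = 1\<^sub>m ?n"
  proof -
    have "transpose_mat U' * U' = four_block_mat (1\<^sub>m 1) (0\<^sub>m 1 m) (0\<^sub>m m 1) (transpose_mat U3 * U3)"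
      unfolding U'T
      by (unfold U'_def, subst mult_four_block_mat[of _ 1 1 _ m _ m _ _ 1 _ m]) (use U3 in auto)
    thus ?thesis using UU3 by simp
  qed
  have CUD: "C = U' * D' * transpose_mat U'"
  proof -
    have "U' * D' = four_block_mat E (0\<^sub>m 1 m) (0\<^sub>m m 1) (U3 * D3)"
      unfolding U'_def D'_def
      by (subst mult_four_block_mat[of _ 1 1 _ m _ m _ _ 1 _ m]) (use U3 D3 E in auto)
    hence "U' * D' * transpose_mat U' = four_block_mat E (0\<^sub>m 1 m) (0\<^sub>m m 1) (U3 * D3 * transpose_mat U3)"
      unfolding U'T
      by (unfold \<open>U' * D' = _\<close>, subst mult_four_block_mat[of _ 1 1 _ m _ m _ _ 1 _ m]) (use U3 D3 E in auto)
    thus ?thesis using Cblock C3eq by simp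
  qed
  define U where "U = W * U'"
  have U: "U \<in> carrier_mat ?n ?n" unfolding U_def using W U' by simp
  have UT: "transpose_mat U = transpose_mat U' * transpose_mat W"
    unfolding U_def using transpose_mult[OF W U'] .
  have "transpose_mat U * U = (transpose_mat U' * transpose_mat W) * (W * U')"
    by (unfold UT, unfold U_def, rule refl)
  also have "\<dots> = transpose_mat U' * (transpose_mat W * W) * U'"
    using W U' by (simp add: assoc_mult_mat[of _ ?n ?n _ ?n _ ?n])
  finally have UU: "transpose_mat U * U = 1\<^sub>m ?n" using WW U'TU' U' by simp
  have AC: "A = W * C * transpose_mat W"
  proof -
    have "W * C * transpose_mat W = (W * transpose_mat W) * A * (W * transpose_mat W)"
      unfolding C_def using W A by (simp add: assoc_mult_mat[of _ ?n ?n _ ?n _ ?n])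
    thus ?thesis using WW' A by simp
  qed
  have "A = W * (U' * D' * transpose_mat U') * transpose_mat W" using AC CUD by simp
  also have "\<dots> = U * D' * transpose_mat U"
    by (unfold UT, unfold U_def) (use W U' D' in \<open>simp add: assoc_mult_mat[of _ ?n ?n _ ?n _ ?n]\<close>)
  finally have "A = U * D' * transpose_mat U" .
  moreover have "diagonal_mat D'"
    unfolding diagonal_mat_def D'_def
  proof (intro allI impI)
    fix i j assume i: "i < dim_row (four_block_mat E (0\<^sub>m 1 m) (0\<^sub>m m 1) D3)"
      and j: "j < dim_col (four_block_mat E (0\<^sub>m 1 m) (0\<^sub>m m 1) D3)" and ij: "i \<noteq> j"
    hence i: "i < ?n" and j: "j < ?n" using E D3 by auto
    show "four_block_mat E (0\<^sub>m 1 m) (0\<^sub>m m 1) D3 $$ (i, j) = 0"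
      using i j ij dD3 D3 E unfolding diagonal_mat_def by (cases i; cases j) auto
  qed
  ultimately show ?case using U D' UU by blast
qed

lemma proots_linear_prod: "proots (\<Prod>a\<leftarrow>ds. [:- a, 1:]) = mset (ds :: real list)"
proof (induction ds)
  case Nil thus ?case by simp
next
  case (Cons a ds)
  have nz: "(\<Prod>a\<leftarrow>ds. [:- a, 1:]) \<noteq> (0 :: real poly)"
    by (auto simp: prod_list_zero_iff)
  have "proots (\<Prod>x\<leftarrow>a # ds. [:- x, 1:]) = proots ([:- a, 1:] * (\<Prod>x\<leftarrow>ds. [:- x, 1:]))" by simp
  also have "\<dots> = proots [:- a, 1:] + proots (\<Prod>x\<leftarrow>ds. [:- x, 1:])"
    by (rule proots_mult) (use nz in auto)
  also have "proots [:- a, 1:] = {#a#}" using proots_linear_factor[of "- a"] by simp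
  finally show ?case using Cons by simp
qed

lemma second_largest:
  fixes ds :: "real list"
  assumes i0: "i0 < length ds" and j: "j < length ds" and ji: "j \<noteq> i0"
    and mx: "ds ! j \<le> ds ! i0"
  shows "ds ! j \<le> rev (sort ds) ! 1"
proof (rule ccontr)
  assume "\<not> ?thesis"
  hence lt: "rev (sort ds) ! 1 < ds ! j" by simp
  define c where "c = ds ! j"
  define L where "L = sort ds"
  have lenL: "length L = length ds" unfolding L_def by simp
  have n2: "length ds \<ge> 2" using i0 j ji by auto
  have r1: "rev L ! 1 = L ! (length ds - 2)" using n2 lenL by (simp add: rev_nth numeral_2_eq_2)
  have sL: "sorted L" unfolding L_def by simp
  have small: "\<And>i. i \<le> length ds - 2 \<Longrightarrow> L ! i < c"
  proof -
    fix i assume "i \<le> length ds - 2"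
    hence "L ! i \<le> L ! (length ds - 2)" using sorted_nth_mono[OF sL] lenL n2 by auto
    thus "L ! i < c" using lt r1 unfolding L_def c_def by simp
  qed
  have "{i. i < length L \<and> c \<le> L ! i} \<subseteq> {length ds - 1}"
  proof
    fix i assume "i \<in> {i. i < length L \<and> c \<le> L ! i}"
    hence "i < length ds" "c \<le> L ! i" using lenL by auto
    thus "i \<in> {length ds - 1}" using small[of i] by (cases "i \<le> length ds - 2") auto
  qed
  hence "card {i. i < length L \<and> c \<le> L ! i} \<le> card {length ds - 1}"
    by (intro card_mono) auto
  hence "card {i. i < length L \<and> c \<le> L ! i} \<le> 1" by simp
  hence f1: "length (filter (\<lambda>x. c \<le> x) L) \<le> 1" by (simp add: length_filter_conv_card)
  have "{i0, j} \<subseteq> {i. i < length ds \<and> c \<le> ds ! i}" using i0 j mx unfolding c_def by auto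
  hence "card {i0, j} \<le> card {i. i < length ds \<and> c \<le> ds ! i}" by (intro card_mono) auto
  hence "2 \<le> length (filter (\<lambda>x. c \<le> x) ds)" using ji by (simp add: length_filter_conv_card)
  moreover have "length (filter (\<lambda>x. c \<le> x) ds) = length (filter (\<lambda>x. c \<le> x) L)"
    unfolding L_def by (metis mset_filter mset_sort size_mset)
  ultimately show False using f1 by simp
qed

lemma rayleigh:
  fixes A :: "real mat"
  assumes A: "A \<in> carrier_mat n n" and symA: "transpose_mat A = A" and n: "n \<ge> 2"
  shows "\<exists>p \<in> carrier_vec n. \<forall>y \<in> carrier_vec n. p \<bullet> y = 0 \<longrightarrow>
           y \<bullet> (A *\<^sub>v y) \<le> eigenvalues_desc A ! 1 * (y \<bullet> y)"
proof -
  obtain U D where U: "U \<in> carrier_mat n n" and D: "D \<in> carrier_mat n n"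
    and UU: "transpose_mat U * U = 1\<^sub>m n" and dD: "diagonal_mat D"
    and AUD: "A = U * D * transpose_mat U"
    using spectral[OF A symA] by blast
  have UT: "transpose_mat U \<in> carrier_mat n n" using U by simp
  have UU': "U * transpose_mat U = 1\<^sub>m n" using mat_mult_left_right_inverse[OF UT U UU] .
  define ds where "ds = diag_mat D"
  have lends: "length ds = n" unfolding ds_def diag_mat_def using D by simp
  have dsi: "\<And>i. i < n \<Longrightarrow> ds ! i = D $$ (i,i)" unfolding ds_def diag_mat_def using D by simp
  have ut: "upper_triangular D" using dD D unfolding diagonal_mat_def upper_triangular_def by auto
  have "similar_mat A D" unfolding similar_mat_def similar_mat_wit_def Let_def
    using A D U UT UU UU' AUD by (intro exI[of _ U] exI[of _ "transpose_mat U"]) auto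
  hence "char_poly A = char_poly D" by (rule char_poly_similar)
  also have "\<dots> = (\<Prod>a\<leftarrow>ds. [:- a, 1:])" unfolding ds_def by (rule char_poly_upper_triangular[OF D ut])
  finally have cpA: "char_poly A = (\<Prod>a\<leftarrow>ds. [:- a, 1:])" .
  have ev: "eigenvalues_desc A = rev (sort ds)"
    unfolding eigenvalues_desc_def cpA proots_linear_prod by simp
  have npos: "n > 0" using n by simp
  have "ds \<noteq> []" using lends npos by auto
  define i0 where "i0 = (SOME i. i < n \<and> (\<forall>j<n. ds ! j \<le> ds ! i))"
  have "\<exists>i. i < n \<and> (\<forall>j<n. ds ! j \<le> ds ! i)"
  proof -
    have "Max (set ds) \<in> set ds" using \<open>ds \<noteq> []\<close> by simp
    then obtain i where "i < n" "ds ! i = Max (set ds)" using lends by (metis in_set_conv_nth)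
    moreover have "\<forall>j<n. ds ! j \<le> Max (set ds)" using lends by (metis Max_ge finite_set nth_mem)
    ultimately show ?thesis by auto
  qed
  hence "i0 < n \<and> (\<forall>j<n. ds ! j \<le> ds ! i0)" unfolding i0_def by (rule someI_ex)
  hence i0: "i0 < n" and i0max: "\<And>j. j < n \<Longrightarrow> ds ! j \<le> ds ! i0" by auto
  define p where "p = col U i0"
  have p: "p \<in> carrier_vec n" unfolding p_def using U by (metis carrier_matD(1) carrier_vecI col_dim)
  have "\<forall>y \<in> carrier_vec n. p \<bullet> y = 0 \<longrightarrow> y \<bullet> (A *\<^sub>v y) \<le> eigenvalues_desc A ! 1 * (y \<bullet> y)"
  proof (intro ballI impI)
    fix y :: "real vec" assume y: "y \<in> carrier_vec n" and py: "p \<bullet> y = 0"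
    define z where "z = transpose_mat U *\<^sub>v y"
    have z: "z \<in> carrier_vec n" unfolding z_def using U y by simp
    have zi0: "z $ i0 = 0" unfolding z_def using i0 U py p_def by simp
    have "y \<bullet> (A *\<^sub>v y) = y \<bullet> (U *\<^sub>v (D *\<^sub>v z))"
    proof -
      have "A = U * (D * transpose_mat U)" using AUD U D UT by simp
      hence "A *\<^sub>v y = U *\<^sub>v ((D * transpose_mat U) *\<^sub>v y)"
        using assoc_mult_mat_vec[OF U mult_carrier_mat[OF D UT] y] by simp
      also have "(D * transpose_mat U) *\<^sub>v y = D *\<^sub>v z"
        unfolding z_def using assoc_mult_mat_vec[OF D UT y] .
      finally show ?thesis by simp
    qed
    also have "\<dots> = z \<bullet> (D *\<^sub>v z)"
      unfolding z_def using transpose_vec_mult_scalar[OF U, of "D *\<^sub>v z" y] D z y z_def by simp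
    also have "\<dots> = (\<Sum>i<n. z $ i * (ds ! i * z $ i))"
    proof -
      have "\<And>i. i < n \<Longrightarrow> (D *\<^sub>v z) $ i = ds ! i * z $ i"
      proof -
        fix i assume i: "i < n"
        have "(D *\<^sub>v z) $ i = (\<Sum>j\<in>{0..<n}. D $$ (i,j) * z $ j)"
          using D z i by (simp add: scalar_prod_def)
        also have "\<dots> = D $$ (i,i) * z $ i"
          by (rule sum.remove[THEN trans, of _ i]) (use i dD D in \<open>auto simp: diagonal_mat_def intro!: sum.neutral\<close>)
        finally show "(D *\<^sub>v z) $ i = ds ! i * z $ i" using dsi[OF i] by simp
      qed
      thus ?thesis using z D by (simp add: scalar_prod_def lessThan_atLeast0)
    qed
    also have "\<dots> \<le> (\<Sum>i<n. eigenvalues_desc A ! 1 * (z $ i * z $ i))"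
    proof (rule sum_mono)
      fix i assume "i \<in> {..<n}"
      hence i: "i < n" by simp
      show "z $ i * (ds ! i * z $ i) \<le> eigenvalues_desc A ! 1 * (z $ i * z $ i)"
      proof (cases "i = i0")
        case True thus ?thesis using zi0 by simp
      next
        case False
        have "ds ! i \<le> eigenvalues_desc A ! 1" unfolding ev
          by (rule second_largest) (use i i0 False i0max lends in auto)
        hence "ds ! i * (z $ i * z $ i) \<le> eigenvalues_desc A ! 1 * (z $ i * z $ i)"
          by (rule mult_right_mono) simp
        thus ?thesis by (simp add: mult_ac)
      qed
    qed
    also have "\<dots> = eigenvalues_desc A ! 1 * (z \<bullet> z)"
      using z by (simp add: scalar_prod_def lessThan_atLeast0 sum_distrib_left)
    also have "z \<bullet> z = y \<bullet> y"
    proof -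
      have "z \<bullet> z = y \<bullet> (U *\<^sub>v z)"
        using transpose_vec_mult_scalar[OF U z y] unfolding z_def by simp
      also have "U *\<^sub>v z = (U * transpose_mat U) *\<^sub>v y" unfolding z_def using U y by simp
      also have "\<dots> = y" using UU' y by simp
      finally show ?thesis .
    qed
    finally show "y \<bullet> (A *\<^sub>v y) \<le> eigenvalues_desc A ! 1 * (y \<bullet> y)" .
  qed
  thus ?thesis using p by blast
qed

definition Bf :: "nat \<Rightarrow> (nat \<Rightarrow> nat \<Rightarrow> real) \<Rightarrow> (nat \<Rightarrow> real) \<Rightarrow> (nat \<Rightarrow> real) \<Rightarrow> real" where
  "Bf n a f g = (\<Sum>i<n. \<Sum>j<n. f i * a i j * g j)"

lemma Bf_lin1: "Bf n a (\<lambda>i. c * f i + d * g i) h = c * Bf n a f h + d * Bf n a g h"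
proof -
  have "Bf n a (\<lambda>i. c * f i + d * g i) h = (\<Sum>i<n. \<Sum>j<n. c * (f i * a i j * h j) + d * (g i * a i j * h j))"
    unfolding Bf_def by (intro sum.cong refl) (simp add: algebra_simps)
  also have "\<dots> = c * Bf n a f h + d * Bf n a g h" unfolding Bf_def by (simp add: sum.distrib sum_distrib_left)
  finally show ?thesis .
qed

lemma Bf_lin2: "Bf n a h (\<lambda>i. c * f i + d * g i) = c * Bf n a h f + d * Bf n a h g"
proof -
  have "Bf n a h (\<lambda>i. c * f i + d * g i) = (\<Sum>i<n. \<Sum>j<n. c * (h i * a i j * f j) + d * (h i * a i j * g j))"
    unfolding Bf_def by (intro sum.cong refl) (simp add: algebra_simps)
  also have "\<dots> = c * Bf n a h f + d * Bf n a h g" unfolding Bf_def by (simp add: sum.distrib sum_distrib_left)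
  finally show ?thesis .
qed

lemma pos_mult_nonpos: "0 < (c::real) \<Longrightarrow> c * d \<le> 0 \<Longrightarrow> d \<le> 0"
  by (auto simp: mult_le_0_iff)

lemma spectral_cut_sums:
  fixes a :: "nat \<Rightarrow> nat \<Rightarrow> real" and k lam :: real and w p :: "nat \<Rightarrow> real"
  assumes sym: "\<And>i j. i < n \<Longrightarrow> j < n \<Longrightarrow> a j i = a i j"
    and rows: "\<And>i. i < n \<Longrightarrow> (\<Sum>j<n. a i j) = k"
    and w01: "\<And>i. i < n \<Longrightarrow> w i = 0 \<or> w i = 1"
    and ray: "\<And>f. (\<Sum>i<n. p i * f i) = 0 \<Longrightarrow> Bf n a f f \<le> lam * (\<Sum>i<n. f i * f i)"
    and lamk: "lam < k" and npos: "n > 0"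
  shows "real n * (\<Sum>i<n. \<Sum>j<n. w i * a i j * (1 - w j))
           \<ge> (k - lam) * (\<Sum>i<n. w i) * (real n - (\<Sum>i<n. w i))"
proof -
  define t where "t = (\<Sum>i<n. w i)"
  define C where "C = (\<Sum>i<n. \<Sum>j<n. w i * a i j * (1 - w j))"
  define N where "N = real n"
  have Npos: "N > 0" unfolding N_def using npos by simp
  define one :: "nat \<Rightarrow> real" where "one = (\<lambda>_. 1)"
  define x where "x = (\<lambda>i. N * w i + (- t) * one i)"
  have B11: "Bf n a one one = k * N"
    unfolding Bf_def one_def N_def using rows by simp
  have Bw1: "Bf n a w one = k * t"
    unfolding Bf_def one_def t_def by (simp add: sum_distrib_left[symmetric] rows mult.commute)
  have B1w: "Bf n a one w = k * t"
  proof -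
    have "Bf n a one w = (\<Sum>j<n. \<Sum>i<n. a i j * w j)" unfolding Bf_def one_def
      by (subst sum.swap) simp
    also have "\<dots> = (\<Sum>j<n. w j * (\<Sum>i<n. a j i))"
    proof (rule sum.cong[OF refl])
      fix j assume j: "j \<in> {..<n}"
      have "(\<Sum>i<n. a i j * w j) = (\<Sum>i<n. w j * a j i)"
        by (rule sum.cong[OF refl]) (use j sym in auto)
      thus "(\<Sum>i<n. a i j * w j) = w j * (\<Sum>i<n. a j i)" by (simp add: sum_distrib_left)
    qed
    also have "\<dots> = k * t" unfolding t_def using rows by (simp add: sum_distrib_left mult.commute)
    finally show ?thesis .
  qed
  have Bww: "Bf n a w w = k * t - C"
  proof -
    have "Bf n a w w + C = (\<Sum>i<n. \<Sum>j<n. w i * a i j * w j + w i * a i j * (1 - w j))"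
      unfolding Bf_def C_def by (simp only: sum.distrib)
    also have "\<dots> = (\<Sum>i<n. \<Sum>j<n. w i * a i j)"
      by (intro sum.cong refl) (simp add: algebra_simps)
    also have "\<dots> = k * t" using Bw1 unfolding Bf_def one_def by simp
    finally show ?thesis by simp
  qed
  have Bx1: "Bf n a x one = 0" unfolding x_def Bf_lin1 Bw1 B11 by simp
  have B1x: "Bf n a one x = 0" unfolding x_def Bf_lin2 B1w B11 by simp
  have Bxx: "Bf n a x x = N * N * (k * t - C) - k * N * t * t"
    unfolding x_def Bf_lin1 Bf_lin2 Bww Bw1 B1w B11 by (simp add: algebra_simps)
  have ww: "\<And>i. i < n \<Longrightarrow> w i * w i = w i" using w01 by auto
  have sumx: "(\<Sum>i<n. x i) = 0"
    unfolding x_def one_def t_def N_def by (simp add: sum_subtractf sum_distrib_left[symmetric])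
  have sumxx: "(\<Sum>i<n. x i * x i) = N * t * (N - t)"
  proof -
    have "(\<Sum>i<n. x i * x i) = (\<Sum>i<n. N * N * (w i * w i) - 2 * N * t * w i + t * t)"
      unfolding x_def one_def by (intro sum.cong refl) (simp add: algebra_simps)
    also have "\<dots> = (\<Sum>i<n. N * N * w i - 2 * N * t * w i + t * t)"
      by (intro sum.cong refl) (simp add: ww)
    also have "\<dots> = N * N * t - 2 * N * t * t + N * t * t"
      unfolding t_def N_def by (simp add: sum.distrib sum_subtractf sum_distrib_left[symmetric])
    finally show ?thesis by (simp add: algebra_simps)
  qed
  define P where "P = (\<Sum>i<n. p i)"
  have P0: "P \<noteq> 0"
  proof
    assume "P = 0"
    hence "(\<Sum>i<n. p i * one i) = 0" unfolding P_def one_def by simp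
    from ray[OF this] have "k * N \<le> lam * N" using B11 unfolding one_def N_def by simp
    thus False using Npos lamk by simp
  qed
  define \<alpha> where "\<alpha> = (\<Sum>i<n. p i * x i)"
  define \<beta> where "\<beta> = - P"
  define y where "y = (\<lambda>i. \<alpha> * one i + \<beta> * x i)"
  have "(\<Sum>i<n. p i * y i) = \<alpha> * P + \<beta> * (\<Sum>i<n. p i * x i)"
    unfolding y_def one_def P_def
    by (simp add: algebra_simps sum.distrib sum_distrib_left)
  hence "(\<Sum>i<n. p i * y i) = \<alpha> * P + \<beta> * \<alpha>" unfolding \<alpha>_def .
  hence "(\<Sum>i<n. p i * y i) = 0" unfolding \<beta>_def by simp
  from ray[OF this] have ineq: "Bf n a y y \<le> lam * (\<Sum>i<n. y i * y i)" .
  have Byy: "Bf n a y y = \<alpha> * \<alpha> * (k * N) + \<beta> * \<beta> * Bf n a x x"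
    unfolding y_def Bf_lin1 Bf_lin2 Bx1 B1x B11 by (simp add: algebra_simps)
  have syy: "(\<Sum>i<n. y i * y i) = \<alpha> * \<alpha> * N + \<beta> * \<beta> * (\<Sum>i<n. x i * x i)"
  proof -
    have "(\<Sum>i<n. y i * y i) = (\<Sum>i<n. \<alpha> * \<alpha> + 2 * \<alpha> * \<beta> * x i + \<beta> * \<beta> * (x i * x i))"
      unfolding y_def one_def by (intro sum.cong refl) (simp add: algebra_simps)
    also have "\<dots> = \<alpha> * \<alpha> * N + 2 * \<alpha> * \<beta> * (\<Sum>i<n. x i) + \<beta> * \<beta> * (\<Sum>i<n. x i * x i)"
      unfolding N_def by (simp add: sum.distrib sum_distrib_left)
    finally show ?thesis using sumx by simp
  qed
  have bb: "\<beta> * \<beta> > 0" using P0 unfolding \<beta>_def by (metis mult_minus_left minus_mult_right minus_minus not_real_square_gt_zero)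
  have "\<beta> * \<beta> * (Bf n a x x - lam * (\<Sum>i<n. x i * x i)) \<le> \<alpha> * \<alpha> * N * (lam - k)"
    using ineq unfolding Byy syy by (simp add: algebra_simps)
  also have "\<dots> \<le> 0"
    using lamk Npos by (intro mult_nonneg_nonpos) auto
  finally have "Bf n a x x - lam * (\<Sum>i<n. x i * x i) \<le> 0"
    using pos_mult_nonpos[OF bb] by blast
  hence "N * N * (k * t - C) - k * N * t * t \<le> lam * (N * t * (N - t))"
    unfolding Bxx sumxx by simp
  hence "N * (N * (k * t - C) - k * t * t - lam * (t * (N - t))) \<le> 0"
    by (simp add: algebra_simps)
  hence "N * (k * t - C) - k * t * t - lam * (t * (N - t)) \<le> 0"
    using Npos by (simp add: mult_le_0_iff)
  hence "N * C \<ge> (k - lam) * t * (N - t)" by (simp add: algebra_simps)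
  thus ?thesis unfolding N_def C_def t_def .
qed

lemma comb_sums:
  fixes a :: "nat \<Rightarrow> nat \<Rightarrow> real" and k :: real and w :: "nat \<Rightarrow> real"
  assumes rows: "\<And>i. i < n \<Longrightarrow> (\<Sum>j<n. a i j) = k"
    and diag: "\<And>i. i < n \<Longrightarrow> a i i = 0"
    and a01: "\<And>i j. i < n \<Longrightarrow> j < n \<Longrightarrow> 0 \<le> a i j \<and> a i j \<le> 1"
    and w01: "\<And>i. i < n \<Longrightarrow> w i = 0 \<or> w i = 1"
  shows "(\<Sum>i<n. \<Sum>j<n. w i * a i j * (1 - w j)) \<ge> (\<Sum>i<n. w i) * (k - (\<Sum>i<n. w i) + 1)"
proof -
  define t where "t = (\<Sum>i<n. w i)"
  have tm: "\<And>i. i < n \<Longrightarrow> (\<Sum>j<n. w i * a i j * (1 - w j)) \<ge> w i * (k - t + 1)"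
  proof -
    fix i assume i: "i < n"
    have "(\<Sum>j<n. w i * a i j * (1 - w j)) = w i * ((\<Sum>j<n. a i j) - (\<Sum>j<n. a i j * w j))"
      by (simp add: sum_distrib_left sum_subtractf[symmetric] algebra_simps)
    also have "\<dots> = w i * (k - (\<Sum>j<n. a i j * w j))" using rows[OF i] by simp
    finally have eq: "(\<Sum>j<n. w i * a i j * (1 - w j)) = w i * (k - (\<Sum>j<n. a i j * w j))" .
    show "(\<Sum>j<n. w i * a i j * (1 - w j)) \<ge> w i * (k - t + 1)"
    proof (cases "w i = 0")
      case True thus ?thesis using eq by simp
    next
      case False
      hence wi: "w i = 1" using w01[OF i] by auto
      have "(\<Sum>j<n. a i j * w j) \<le> (\<Sum>j<n. (if j = i then 0 else w j))"
      proof (rule sum_mono)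
        fix j assume j: "j \<in> {..<n}"
        show "a i j * w j \<le> (if j = i then 0 else w j)"
        proof (cases "j = i")
          case True thus ?thesis using diag[OF i] by simp
        next
          case False
          have "a i j * w j \<le> 1 * w j" using a01[OF i, of j] w01[of j] j
            by (intro mult_right_mono) auto
          thus ?thesis using False by simp
        qed
      qed
      also have "\<dots> = t - w i"
      proof -
        have "(\<Sum>j<n. (if j = i then 0 else w j)) + (\<Sum>j<n. (if j = i then w j else 0)) = (\<Sum>j<n. w j)"
          by (subst sum.distrib[symmetric]) (rule sum.cong, auto)
        hence "(\<Sum>j<n. (if j = i then 0 else w j)) = (\<Sum>j<n. w j) - (\<Sum>j<n. (if j = i then w j else 0))"
          by simp
        also have "(\<Sum>j<n. (if j = i then w j else 0)) = w i" using i by simp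
        finally show ?thesis unfolding t_def .
      qed
      finally show ?thesis using eq wi by simp
    qed
  qed
  have "(\<Sum>i<n. w i * (k - t + 1)) \<le> (\<Sum>i<n. \<Sum>j<n. w i * a i j * (1 - w j))"
    by (rule sum_mono) (use tm in auto)
  moreover have "(\<Sum>i<n. w i * (k - t + 1)) = t * (k - t + 1)"
    unfolding t_def by (simp add: sum_distrib_right)
  ultimately show ?thesis unfolding t_def by simp
qed

lemma cut_sym_sums:
  fixes a :: "nat \<Rightarrow> nat \<Rightarrow> real" and w :: "nat \<Rightarrow> real"
  assumes sym: "\<And>i j. i < n \<Longrightarrow> j < n \<Longrightarrow> a j i = a i j"
  shows "(\<Sum>i<n. \<Sum>j<n. w i * a i j * (1 - w j)) = (\<Sum>i<n. \<Sum>j<n. (1 - w i) * a i j * (1 - (1 - w j)))"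
proof -
  have "(\<Sum>i<n. \<Sum>j<n. w i * a i j * (1 - w j)) = (\<Sum>j<n. \<Sum>i<n. w i * a i j * (1 - w j))"
    by (rule sum.swap)
  also have "\<dots> = (\<Sum>j<n. \<Sum>i<n. (1 - w j) * a j i * (1 - (1 - w i)))"
    by (intro sum.cong refl) (auto simp: sym)
  finally show ?thesis .
qed

lemma final_arith:
  fixes c s n k :: nat and lam :: real
  assumes s1: "1 \<le> s" and sn: "s < n" and lamk: "lam < real k / 2"
    and h1: "real n * real c \<ge> (real k - lam) * real s * (real n - real s)"
    and h2: "real c \<ge> real s * (real k - real s + 1)"
    and h3: "real c \<ge> (real n - real s) * (real k - (real n - real s) + 1)"
  shows "k \<le> c"
proof -
  define m where "m = min s (n - s)"
  define M where "M = max s (n - s)"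
  have m1: "1 \<le> m" unfolding m_def using s1 sn by auto
  have mM: "real m * real M = real s * (real n - real s)"
    unfolding m_def M_def using sn by (cases "s \<le> n - s") (auto simp: of_nat_diff)
  have Mn: "2 * real M \<ge> real n" unfolding M_def using sn by auto
  have hm: "real c \<ge> real m * (real k - real m + 1)"
    unfolding m_def using h2 h3 sn by (cases "s \<le> n - s") (auto simp: of_nat_diff)
  show ?thesis
  proof (cases "m \<le> k")
    case True
    have "real m * (real k - real m + 1) - real k = (real m - 1) * (real k - real m)"
      by (simp add: algebra_simps)
    also have "\<dots> \<ge> 0" using True m1 by (intro mult_nonneg_nonneg) auto
    finally have "real c \<ge> real k" using hm by linarith
    thus ?thesis by simp
  next
    case False
    hence mk: "real m \<ge> real k + 1" by simp
    have Mpos: "real M > 0" using m1 unfolding M_def m_def by auto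
    have kpos: "real k \<ge> 0" by simp
    have "real k / 2 < real k - lam" using lamk by simp
    have "(real k / 2) * (real m * real M) \<le> (real k - lam) * (real m * real M)"
      using lamk m1 Mpos by (intro mult_right_mono) auto
    also have "\<dots> \<le> real n * real c" using h1 mM by (simp add: mult.assoc)
    finally have A1: "(real k / 2) * (real m * real M) \<le> real n * real c" .
    have "(real k / 2) * (real m * (real n / 2)) \<le> (real k / 2) * (real m * real M)"
      using Mn m1 by (intro mult_left_mono) auto
    with A1 have "real k * real m * real n \<le> 4 * real n * real c" by (simp add: algebra_simps)
    hence A2: "real k * real m \<le> 4 * real c" using sn by (simp add: mult.commute mult_le_cancel_left_pos)
    have "real k * (real k + 1) \<le> real k * real m" using mk by (intro mult_left_mono) auto
    with A2 have "real k * (real k + 1) \<le> 4 * real c" by linarith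
    moreover have "4 * (real k - 1) < real k * (real k + 1)"
    proof -
      have "real k * (real k + 1) - 4 * (real k - 1) = (real k - 3/2)^2 + 7/4"
        by (simp add: power2_eq_square algebra_simps)
      moreover have "(real k - 3/2)^2 \<ge> 0" by simp
      ultimately show ?thesis by linarith
    qed
    ultimately have "4 * (real k - 1) < 4 * real c" by (meson less_le_trans)
    hence "real k - 1 < real c" by simp
    thus ?thesis by linarith
  qed
qed

lemma sum_indicator_card:
  "(\<Sum>j<(n::nat). (if P j then 1 else 0 :: real)) = real (card {j. j < n \<and> P j})"
proof (induction n)
  case 0 thus ?case by simp
next
  case (Suc n)
  have e: "{j. j < Suc n \<and> P j} = (if P n then insert n {j. j < n \<and> P j} else {j. j < n \<and> P j})"
    by (auto simp: less_Suc_eq)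
  show ?case using Suc by (simp add: e)
qed

lemma quadform_adj:
  "vec n f \<bullet> (adj_matrix n E *\<^sub>v vec n f) = Bf n (\<lambda>i j. if E i j then 1 else 0) f f"
proof -
  have "\<And>i. i < n \<Longrightarrow> (adj_matrix n E *\<^sub>v vec n f) $ i = (\<Sum>j<n. (if E i j then 1 else 0) * f j)"
    unfolding adj_matrix_def by (simp add: scalar_prod_def lessThan_atLeast0)
  hence "vec n f \<bullet> (adj_matrix n E *\<^sub>v vec n f) = (\<Sum>i<n. f i * (\<Sum>j<n. (if E i j then 1 else 0) * f j))"
    unfolding adj_matrix_def by (simp add: scalar_prod_def lessThan_atLeast0)
  also have "\<dots> = Bf n (\<lambda>i j. if E i j then 1 else 0) f f"
    unfolding Bf_def by (simp add: sum_distrib_left mult.assoc)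
  finally show ?thesis .
qed

theorem lemma3p5:
  "\<exists>N :: real \<Rightarrow> nat. \<forall>n E k.
     regular_graph n E k \<and> lambda2_norm n E k < 1/2 \<and> n \<ge> N (lambda2_norm n E k) \<longrightarrow>
     (\<forall>S. S \<noteq> {} \<and> S \<subset> {0..<n} \<longrightarrow> card (cut_edges n E S) \<ge> k)"
proof (intro exI[of _ "\<lambda>_. 0"] allI impI)
  fix n E k S
  assume H: "regular_graph n E k \<and> lambda2_norm n E k < 1/2 \<and> 0 \<le> n"
    and HS: "S \<noteq> {} \<and> S \<subset> {0..<n}"
  have sg: "simple_graph n E" and deg: "\<And>v. v < n \<Longrightarrow> card {u. u < n \<and> E v u} = k"
    using H unfolding regular_graph_def by auto
  have Eprops: "\<And>u v. E u v \<Longrightarrow> u < n \<and> v < n \<and> u \<noteq> v \<and> E v u"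
    using sg unfolding simple_graph_def by blast
  have Esym: "\<And>u v. E v u = E u v" using Eprops by blast
  show "k \<le> card (cut_edges n E S)"
  proof (cases "k = 0")
    case True thus ?thesis by simp
  next
    case False
    hence kpos: "real k > 0" by simp
    define a :: "nat \<Rightarrow> nat \<Rightarrow> real" where "a = (\<lambda>i j. if E i j then 1 else 0)"
    define w :: "nat \<Rightarrow> real" where "w = (\<lambda>i. if i \<in> S then 1 else 0)"
    define s where "s = card S"
    define c where "c = card (cut_edges n E S)"
    define lam where "lam = lambda2 n E"
    have Ssub: "S \<subseteq> {0..<n}" and Sne: "S \<noteq> {}" and Sneq: "S \<noteq> {0..<n}" using HS by auto
    have finS: "finite S" using Ssub finite_subset by blast
    have s1: "1 \<le> s" unfolding s_def using Sne finS by (simp add: Suc_le_eq card_gt_0_iff)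
    have "s < card {0..<n}" unfolding s_def using HS by (intro psubset_card_mono) auto
    hence sn: "s < n" by simp
    have n2: "n \<ge> 2" using s1 sn by simp
    have lamk: "lam < real k / 2"
      using H kpos unfolding lambda2_norm_def lam_def by (simp add: field_simps)
    have sym: "\<And>i j. i < n \<Longrightarrow> j < n \<Longrightarrow> a j i = a i j" unfolding a_def using Esym by simp
    have rows: "\<And>i. i < n \<Longrightarrow> (\<Sum>j<n. a i j) = real k"
      unfolding a_def using deg by (simp add: sum_indicator_card)
    have diag: "\<And>i. i < n \<Longrightarrow> a i i = 0" unfolding a_def using Eprops by auto
    have a01: "\<And>i j. i < n \<Longrightarrow> j < n \<Longrightarrow> 0 \<le> a i j \<and> a i j \<le> 1" unfolding a_def by auto
    have w01: "\<And>i. i < n \<Longrightarrow> w i = 0 \<or> w i = 1" unfolding w_def by auto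
    have tsum: "(\<Sum>i<n. w i) = real s"
    proof -
      have "(\<Sum>i<n. w i) = real (card {j. j < n \<and> j \<in> S})" unfolding w_def by (rule sum_indicator_card)
      also have "{j. j < n \<and> j \<in> S} = S" using Ssub by auto
      finally show ?thesis unfolding s_def .
    qed
    define g where "g = (\<lambda>u. \<Sum>j<n. (if j \<notin> S \<and> E u j then 1 else 0 :: real))"
    have cut_eq: "real c = (\<Sum>u\<in>S. g u)"
    proof -
      have "cut_edges n E S = Sigma S (\<lambda>u. {j. j < n \<and> (j \<notin> S \<and> E u j)})"
        unfolding cut_edges_def by auto
      hence "c = (\<Sum>u\<in>S. card {j. j < n \<and> (j \<notin> S \<and> E u j)})"
        unfolding c_def using finS by (simp add: card_SigmaI)
      hence "real c = (\<Sum>u\<in>S. real (card {j. j < n \<and> (j \<notin> S \<and> E u j)}))" by simp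
      also have "\<dots> = (\<Sum>u\<in>S. g u)" unfolding g_def by (simp add: sum_indicator_card)
      finally show ?thesis .
    qed
    have Cw: "(\<Sum>i<n. \<Sum>j<n. w i * a i j * (1 - w j)) = real c"
    proof -
      have "(\<Sum>i<n. \<Sum>j<n. w i * a i j * (1 - w j)) = (\<Sum>i<n. if i \<in> S then g i else 0)"
        unfolding w_def a_def g_def by (intro sum.cong refl) (auto intro!: sum.cong)
      also have "\<dots> = (\<Sum>i\<in>{i\<in>{..<n}. i \<in> S}. g i)" by (rule sum.inter_filter[OF finite_lessThan, symmetric])
      also have "{i\<in>{..<n}. i \<in> S} = S" using Ssub by auto
      finally show ?thesis using cut_eq by simp
    qed
    have A: "adj_matrix n E \<in> carrier_mat n n" unfolding adj_matrix_def by simp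
    have symA: "transpose_mat (adj_matrix n E) = adj_matrix n E"
      unfolding adj_matrix_def by (rule eq_matI) (auto simp: Esym)
    obtain p where p: "p \<in> carrier_vec n" and pray: "\<forall>y \<in> carrier_vec n. p \<bullet> y = 0 \<longrightarrow>
           y \<bullet> (adj_matrix n E *\<^sub>v y) \<le> eigenvalues_desc (adj_matrix n E) ! 1 * (y \<bullet> y)"
      using rayleigh[OF A symA n2] by blast
    have ray: "\<And>f. (\<Sum>i<n. p $ i * f i) = 0 \<Longrightarrow> Bf n a f f \<le> lam * (\<Sum>i<n. f i * f i)"
    proof -
      fix f :: "nat \<Rightarrow> real" assume pf: "(\<Sum>i<n. p $ i * f i) = 0"
      have "p \<bullet> vec n f = 0" using pf p by (simp add: scalar_prod_def lessThan_atLeast0)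
      from pray[rule_format, OF _ this] have
        "vec n f \<bullet> (adj_matrix n E *\<^sub>v vec n f) \<le> lam * (vec n f \<bullet> vec n f)"
        unfolding lam_def lambda2_def by simp
      thus "Bf n a f f \<le> lam * (\<Sum>i<n. f i * f i)"
        unfolding quadform_adj a_def by (simp add: scalar_prod_def lessThan_atLeast0)
    qed
    have lk: "lam < real k" using lamk kpos by simp
    have npos: "n > 0" using n2 by simp
    have h1: "real n * real c \<ge> (real k - lam) * real s * (real n - real s)"
      using spectral_cut_sums[where a = a and w = w and p = "\<lambda>i. p $ i", OF sym rows w01 ray lk npos] unfolding Cw tsum .
    have h2: "real c \<ge> real s * (real k - real s + 1)"
      using comb_sums[where a = a and w = w, OF rows diag a01 w01] unfolding Cw tsum .
    have w01': "\<And>i. i < n \<Longrightarrow> 1 - w i = 0 \<or> 1 - w i = 1" using w01 by force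
    have tsum': "(\<Sum>i<n. 1 - w i) = real n - real s" using tsum by (simp add: sum_subtractf)
    have h3: "real c \<ge> (real n - real s) * (real k - (real n - real s) + 1)"
    proof -
      have "(\<Sum>i<n. \<Sum>j<n. (1 - w i) * a i j * (1 - (1 - w j))) \<ge> (\<Sum>i<n. 1 - w i) * (real k - (\<Sum>i<n. 1 - w i) + 1)"
        by (rule comb_sums[OF rows diag a01 w01'])
      hence f': "(\<Sum>i<n. \<Sum>j<n. (1 - w i) * a i j * (1 - (1 - w j))) \<ge> (real n - real s) * (real k - (real n - real s) + 1)"
        by (simp only: tsum')
      have eq: "(\<Sum>i<n. \<Sum>j<n. w i * a i j * (1 - w j)) = (\<Sum>i<n. \<Sum>j<n. (1 - w i) * a i j * (1 - (1 - w j)))"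
        by (rule cut_sym_sums[OF sym])
      show ?thesis using f' eq Cw by linarith
    qed
    show ?thesis using final_arith[OF s1 sn lamk h1 h2 h3] unfolding c_def .
  qed
qed

end
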